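(* Let $n\ge 4$ and let $A=\{a_1,\dots,a_m\}$ with $a_1<a_2<\dots<a_m$, and let $s,t$ be any two distinct vertices of $QJ(n,A)$. (i) If $1\le a_1<\dots<a_m<n-1$, then for every $1\le i<m$ and any two distinct vertices $u,w$ of level $i$ (the copy of $J(n,a_i)$), there exist distinct vertices $u',w'$ of level $i+1$ (the copy of $J(n,a_{i+1})$), neither equal to $s$ or $t$, such that $u'$ is adjacent to $u$ and $w'$ is adjacent to $w$. (ii) If $1<a_1<\dots<a_m\le n-1$, then for every $1<i\le m$ and any two distinct vertices $u,w$ of level $i$, there exist distinct vertices $u',w'$ of level $i-1$, neither equal to $s$ or $t$, such that $u'$ is adjacent to $u$ and $w'$ is adjacent to $w$. (iii) If $A=\{1,n-1\}$, then any two distinct vertices of level 1 have distinct neighbours (respectively) in level 2 avoiding $\{s,t\}$, and any two distinct vertices of level 2 have distinct neighbours (respectively) in level 1 avoiding $\{s,t\}$.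
   Context: Let $[n]=\{1,\dots,n\}$. The Johnson graph $J(n,k)$ has as vertices the $k$-subsets of $[n]$, two being adjacent iff they share exactly $k-1$ elements. For a nonempty $A=\{a_1<a_2<\dots<a_m\}\subseteq[n]$, the graph $QJ(n,A)$ is formed by taking, for each $i$, a copy of $J(n,a_i)$ (called level $i$), and additionally joining a vertex $u$ of level $i$ to a vertex $v$ of level $i+1$ whenever $u\subseteq v$ (for $1\le i<m$); there are no other edges. *)

theory Defs
  imports Main
begin

text \<open>A is a nonempty subset of [n]; a_i is the i-th smallest element (1-indexed).\<close>
definition elemA :: "nat set \<Rightarrow> nat \<Rightarrow> nat" where
  "elemA A i = sorted_list_of_set A ! (i - 1)"

definition QJ_level :: "nat \<Rightarrow> nat set \<Rightarrow> nat \<Rightarrow> (nat \<times> nat set) set" where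
  "QJ_level n A i = {(i, S) | S. 1 \<le> i \<and> i \<le> card A \<and> S \<subseteq> {1..n} \<and> card S = elemA A i}"

definition QJ_verts :: "nat \<Rightarrow> nat set \<Rightarrow> (nat \<times> nat set) set" where
  "QJ_verts n A = (\<Union>i\<in>{1..card A}. QJ_level n A i)"

definition QJ_adj :: "nat \<Rightarrow> nat set \<Rightarrow> nat \<times> nat set \<Rightarrow> nat \<times> nat set \<Rightarrow> bool" where
  "QJ_adj n A u v \<longleftrightarrow> u \<in> QJ_verts n A \<and> v \<in> QJ_verts n A \<and>
     ((fst u = fst v \<and> card (snd u \<inter> snd v) = elemA A (fst u) - 1) \<or>
      (fst v = fst u + 1 \<and> snd u \<subseteq> snd v) \<or>
      (fst u = fst v + 1 \<and> snd v \<subseteq> snd u))"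

end

theory Submission imports Defs begin

lemma diff21: "(2::nat) - 1 = 1" by simp

lemma choose_ge: "0 < d \<Longrightarrow> d < m \<Longrightarrow> m \<le> m choose d"
proof (induction m arbitrary: d)
  case 0 then show ?case by simp
next
  case (Suc m)
  then obtain d' where d: "d = Suc d'" by (cases d) auto
  show ?case
  proof (cases "d' = 0")
    case True then show ?thesis using d by simp
  next
    case False
    have "m \<le> m choose d'" using Suc.IH[of d'] False Suc.prems d by simp
    moreover have "0 < m choose Suc d'" using Suc.prems d by simp
    ultimately have "Suc m \<le> (m choose d') + (m choose Suc d')" by linarith
    then show ?thesis using d by simp
  qed
qed

lemma card3_eq:
  assumes "finite X" "3 \<le> card X" "X - {s,t} \<subseteq> {x}"
  shows "X = {x,s,t}"
proof -
  have sub: "X \<subseteq> {x,s,t}" using assms(3) by blast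
  have "card {x,s,t} \<le> 3" by (simp add: card_insert_if)
  then show ?thesis using card_seteq[OF _ sub] assms by simp
qed

lemma pick2:
  assumes "finite X" "finite Y" "3 \<le> card X" "3 \<le> card Y" "X \<noteq> Y"
  shows "\<exists>x y. x \<in> X \<and> y \<in> Y \<and> x \<noteq> y \<and> x \<notin> {s, t} \<and> y \<notin> {s, t}"
proof (rule ccontr)
  assume H: "\<not> ?thesis"
  have c2: "card {s,t} \<le> 2" by (simp add: card_insert_if)
  have "card X - card {s,t} \<le> card (X - {s,t})" by (rule diff_card_le_card_Diff) simp
  then have "card (X - {s,t}) \<ge> 1" using c2 assms(3) by linarith
  then have "X - {s,t} \<noteq> {}" by (metis card.empty not_one_le_zero)
  then obtain x where x: "x \<in> X - {s,t}" by blast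
  have "card Y - card {s,t} \<le> card (Y - {s,t})" by (rule diff_card_le_card_Diff) simp
  then have "card (Y - {s,t}) \<ge> 1" using c2 assms(4) by linarith
  then have "Y - {s,t} \<noteq> {}" by (metis card.empty not_one_le_zero)
  then obtain y where y: "y \<in> Y - {s,t}" by blast
  have "Y - {s,t} \<subseteq> {x}" using H x by blast
  have "X - {s,t} \<subseteq> {y}" using H y by blast
  then have "x = y" using x by blast
  have "X = {x,s,t}" using card3_eq[OF assms(1,3)] \<open>X - {s,t} \<subseteq> {y}\<close> \<open>x = y\<close> by simp
  moreover have "Y = {x,s,t}" using card3_eq[OF assms(2,4)] \<open>Y - {s,t} \<subseteq> {x}\<close> by simp
  ultimately show False using assms(5) by simp
qed

lemma elemA_mono:
  assumes "finite A" "1 \<le> i" "i < j" "j \<le> card A"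
  shows "elemA A i < elemA A j"
  using assms sorted_wrt_nth_less[OF strict_sorted_list_of_set[of A], of "i-1" "j-1"]
  by (simp add: elemA_def)

lemma elemA_in:
  assumes "finite A" "1 \<le> i" "i \<le> card A"
  shows "elemA A i \<in> A"
  using assms nth_mem[of "i-1" "sorted_list_of_set A"] by (simp add: elemA_def)

lemma level_verts: "x \<in> QJ_level n A i \<Longrightarrow> x \<in> QJ_verts n A"
  unfolding QJ_verts_def QJ_level_def by auto

lemma card_supersets:
  assumes "U \<subseteq> {1..(n::nat)}" "card U = k" "k \<le> l"
  shows "card {V. V \<subseteq> {1..n} \<and> card V = l \<and> U \<subseteq> V} = (n - k) choose (l - k)"
proof -
  have fU: "finite U" using assms(1) finite_subset by blast
  let ?D = "{D. D \<subseteq> {1..n} - U \<and> card D = l - k}"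
  have eq: "{V. V \<subseteq> {1..n} \<and> card V = l \<and> U \<subseteq> V} = (\<lambda>D. U \<union> D) ` ?D"
  proof
    show "{V. V \<subseteq> {1..n} \<and> card V = l \<and> U \<subseteq> V} \<subseteq> (\<lambda>D. U \<union> D) ` ?D"
    proof
      fix V assume V: "V \<in> {V. V \<subseteq> {1..n} \<and> card V = l \<and> U \<subseteq> V}"
      have fV: "finite V" using V finite_subset by blast
      have "card (V - U) = l - k" using V assms card_Diff_subset[OF fU] by auto
      moreover have "V = U \<union> (V - U)" using V by auto
      ultimately show "V \<in> (\<lambda>D. U \<union> D) ` ?D" using V by blast
    qed
  next
    show "(\<lambda>D. U \<union> D) ` ?D \<subseteq> {V. V \<subseteq> {1..n} \<and> card V = l \<and> U \<subseteq> V}"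
    proof
      fix V assume "V \<in> (\<lambda>D. U \<union> D) ` ?D"
      then obtain D where D: "D \<subseteq> {1..n} - U" "card D = l - k" "V = U \<union> D" by blast
      have fD: "finite D" using D(1) finite_subset by blast
      have disj: "U \<inter> D = {}" using D(1) by blast
      have "card V = card U + card D" unfolding D(3) by (rule card_Un_disjoint[OF fU fD disj])
      then have "card V = k + (l - k)" using D(2) assms(2) by simp
      then show "V \<in> {V. V \<subseteq> {1..n} \<and> card V = l \<and> U \<subseteq> V}" using D assms by auto
    qed
  qed
  have inj: "inj_on (\<lambda>D. U \<union> D) ?D"
  proof (rule inj_onI)
    fix D1 D2 assume D1: "D1 \<in> ?D" and D2: "D2 \<in> ?D" and e: "U \<union> D1 = U \<union> D2"
    have "D1 = (U \<union> D1) - U" using D1 by auto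
    also have "\<dots> = (U \<union> D2) - U" using e by simp
    also have "\<dots> = D2" using D2 by auto
    finally show "D1 = D2" .
  qed
  have "card ?D = card ({1..n} - U) choose (l - k)" by (rule n_subsets) simp
  moreover have "card ({1..n} - U) = card {1..n} - card U" by (rule card_Diff_subset[OF fU assms(1)])
  then have "card ({1..n} - U) = n - k" using assms(2) by simp
  ultimately show ?thesis using eq card_image[OF inj] by simp
qed

lemma supersets_differ:
  assumes "U \<subseteq> {1..(n::nat)}" "card U = k" "W \<subseteq> {1..n}" "card W = k" "U \<noteq> W" "k \<le> l" "l < n"
  shows "{V. V \<subseteq> {1..n} \<and> card V = l \<and> U \<subseteq> V} \<noteq> {V. V \<subseteq> {1..n} \<and> card V = l \<and> W \<subseteq> V}"
proof
  assume E: "{V. V \<subseteq> {1..n} \<and> card V = l \<and> U \<subseteq> V} = {V. V \<subseteq> {1..n} \<and> card V = l \<and> W \<subseteq> V}"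
  have fU: "finite U" using assms(1) finite_subset by blast
  have fW: "finite W" using assms(3) finite_subset by blast
  have "\<not> U \<subseteq> W"
  proof
    assume "U \<subseteq> W"
    then have "U = W" using card_subset_eq[OF fW] assms(2,4) by metis
    then show False using assms(5) by contradiction
  qed
  then obtain x where x: "x \<in> U" "x \<notin> W" by blast
  have "card ({1..n} - W) = card {1..n} - card W" by (rule card_Diff_subset[OF fW assms(3)])
  then have c1: "card ({1..n} - W) = n - k" using assms(4) by simp
  have "x \<in> {1..n} - W" using x assms(1) by blast
  then have "card ({1..n} - W - {x}) = n - k - 1" using c1 by (simp add: card_Diff_singleton)
  then have "l - k \<le> card ({1..n} - W - {x})" using assms by linarith
  then obtain T where T: "T \<subseteq> {1..n} - W - {x}" "card T = l - k" "finite T"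
    by (rule obtain_subset_with_card_n)
  let ?V = "W \<union> T"
  have disj: "W \<inter> T = {}" using T(1) by blast
  have "card ?V = card W + card T" by (rule card_Un_disjoint[OF fW T(3) disj])
  then have "card ?V = k + (l - k)" using T(2) assms(4) by simp
  then have "card ?V = l" using assms(6) by simp
  moreover have "?V \<subseteq> {1..n}" using T(1) assms(3) by blast
  ultimately have m: "?V \<in> {V. V \<subseteq> {1..n} \<and> card V = l \<and> W \<subseteq> V}" by simp
  have m2: "?V \<in> {V. V \<subseteq> {1..n} \<and> card V = l \<and> U \<subseteq> V}" unfolding E by (rule m)
  have "x \<notin> ?V" using x(2) T(1) by blast
  then show False using m2 x(1) by blast
qed

lemma card_subsets_k:
  assumes "U \<subseteq> {1..(n::nat)}" "card U = l"
  shows "card {V. V \<subseteq> U \<and> card V = k} = l choose k"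
proof -
  have fin: "finite U" using assms(1) finite_subset by blast
  have "card {V. V \<subseteq> U \<and> card V = k} = card U choose k" by (rule n_subsets[OF fin])
  then show ?thesis using assms(2) by (simp only:)
qed

lemma subsets_differ:
  assumes "U \<subseteq> {1..(n::nat)}" "card U = l" "W \<subseteq> {1..n}" "card W = l" "U \<noteq> W" "1 \<le> k" "k \<le> l"
  shows "{V. V \<subseteq> U \<and> card V = k} \<noteq> {V. V \<subseteq> W \<and> card V = k}"
proof
  assume E: "{V. V \<subseteq> U \<and> card V = k} = {V. V \<subseteq> W \<and> card V = k}"
  have fU: "finite U" using assms(1) finite_subset by blast
  have fW: "finite W" using assms(3) finite_subset by blast
  have "\<not> U \<subseteq> W"
  proof
    assume "U \<subseteq> W"
    then have "U = W" using card_subset_eq[OF fW] assms(2,4) by metis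
    then show False using assms(5) by contradiction
  qed
  then obtain x where x: "x \<in> U" "x \<notin> W" by blast
  have "card (U - {x}) = l - 1" using x(1) fU assms(2) by simp
  then have "k - 1 \<le> card (U - {x})" using assms by linarith
  then obtain T where T: "T \<subseteq> U - {x}" "card T = k - 1" "finite T"
    by (rule obtain_subset_with_card_n)
  have "x \<notin> T" using T(1) by blast
  then have "card (insert x T) = k" using T(2,3) assms(6) by simp
  moreover have "insert x T \<subseteq> U" using T(1) x(1) by blast
  ultimately have m: "insert x T \<in> {V. V \<subseteq> U \<and> card V = k}" by simp
  have m2: "insert x T \<in> {V. V \<subseteq> W \<and> card V = k}" unfolding E[symmetric] by (rule m)
  then show False using x(2) by blast
qed

lemma level_up:
  assumes fA: "finite A" and i: "1 \<le> i" "i < card A" and ln: "elemA A (i+1) < n"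
    and c3: "3 \<le> (n - elemA A i) choose (elemA A (i+1) - elemA A i)"
    and u: "u \<in> QJ_level n A i" and w: "w \<in> QJ_level n A i" and uw: "u \<noteq> w"
  shows "\<exists>u' w'. u' \<in> QJ_level n A (i + 1) \<and> w' \<in> QJ_level n A (i + 1) \<and> u' \<noteq> w' \<and>
             u' \<notin> {s, t} \<and> w' \<notin> {s, t} \<and> QJ_adj n A u u' \<and> QJ_adj n A w w'"
proof -
  define k where "k = elemA A i"
  define l where "l = elemA A (i+1)"
  have kl: "k < l" using elemA_mono[OF fA i(1), of "i+1"] i unfolding k_def l_def by simp
  obtain U where uU: "u = (i,U)" "U \<subseteq> {1..n}" "card U = k" using u by (auto simp: QJ_level_def k_def)
  obtain W where wW: "w = (i,W)" "W \<subseteq> {1..n}" "card W = k" using w by (auto simp: QJ_level_def k_def)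
  have UW: "U \<noteq> W" using uw uU wW by auto
  define NU where "NU X = {V. V \<subseteq> {1..n} \<and> card V = l \<and> X \<subseteq> V}" for X
  have finN: "finite (NU X)" for X
    by (rule finite_subset[of _ "Pow {1..n}"]) (auto simp: NU_def)
  have cN: "card (NU U) = (n - k) choose (l - k)" unfolding NU_def
    by (rule card_supersets[OF uU(2,3)]) (use kl in simp)
  have cW: "card (NU W) = (n - k) choose (l - k)" unfolding NU_def
    by (rule card_supersets[OF wW(2,3)]) (use kl in simp)
  have dN: "NU U \<noteq> NU W" unfolding NU_def
    by (rule supersets_differ[OF uU(2,3) wW(2,3) UW]) (use kl ln l_def in simp_all)
  have injP: "inj (Pair (i+1) :: nat set \<Rightarrow> nat \<times> nat set)" by (simp add: inj_on_def)
  have cX: "card (Pair (i+1) ` NU X) = card (NU X)" for X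
    by (rule card_image) (use injP in \<open>simp add: inj_on_def\<close>)
  have sX: "snd ` (Pair (i+1) ` NU X) = NU X" for X by (simp add: image_image)
  have neq: "Pair (i+1) ` NU U \<noteq> Pair (i+1) ` NU W"
  proof
    assume "Pair (i+1) ` NU U = Pair (i+1) ` NU W"
    then have "snd ` (Pair (i+1) ` NU U) = snd ` (Pair (i+1) ` NU W)" by (rule arg_cong)
    then show False using dN by (simp only: sX)
  qed
  have c3U: "3 \<le> card (Pair (i+1) ` NU U)" using cX[of U] cN c3 unfolding k_def l_def by simp
  have c3W: "3 \<le> card (Pair (i+1) ` NU W)" using cX[of W] cW c3 unfolding k_def l_def by simp
  obtain x y where xy: "x \<in> Pair (i+1) ` NU U" "y \<in> Pair (i+1) ` NU W" "x \<noteq> y"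
    "x \<notin> {s,t}" "y \<notin> {s,t}"
    using pick2[OF finite_imageI[OF finN] finite_imageI[OF finN] c3U c3W neq, of s t] by blast
  obtain V1 where V1: "x = (i+1, V1)" "V1 \<in> NU U" using xy(1) by blast
  obtain V2 where V2: "y = (i+1, V2)" "V2 \<in> NU W" using xy(2) by blast
  have xl: "x \<in> QJ_level n A (i+1)" using V1 i unfolding QJ_level_def NU_def l_def by auto
  have yl: "y \<in> QJ_level n A (i+1)" using V2 i unfolding QJ_level_def NU_def l_def by auto
  have "QJ_adj n A u x" using level_verts[OF u] level_verts[OF xl] V1 uU
    unfolding QJ_adj_def NU_def by auto
  moreover have "QJ_adj n A w y" using level_verts[OF w] level_verts[OF yl] V2 wW
    unfolding QJ_adj_def NU_def by auto
  ultimately show ?thesis using xl yl xy by blast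
qed

lemma level_down:
  assumes fA: "finite A" and i: "1 < i" "i \<le> card A" and k1: "1 \<le> elemA A (i-1)"
    and c3: "3 \<le> elemA A i choose elemA A (i-1)"
    and u: "u \<in> QJ_level n A i" and w: "w \<in> QJ_level n A i" and uw: "u \<noteq> w"
  shows "\<exists>u' w'. u' \<in> QJ_level n A (i - 1) \<and> w' \<in> QJ_level n A (i - 1) \<and> u' \<noteq> w' \<and>
             u' \<notin> {s, t} \<and> w' \<notin> {s, t} \<and> QJ_adj n A u u' \<and> QJ_adj n A w w'"
proof -
  define k where "k = elemA A (i-1)"
  define l where "l = elemA A i"
  have kl: "k < l" using elemA_mono[OF fA, of "i-1" i] i unfolding k_def l_def by simp
  obtain U where uU: "u = (i,U)" "U \<subseteq> {1..n}" "card U = l" using u by (auto simp: QJ_level_def l_def)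
  obtain W where wW: "w = (i,W)" "W \<subseteq> {1..n}" "card W = l" using w by (auto simp: QJ_level_def l_def)
  have UW: "U \<noteq> W" using uw uU wW by auto
  define NU :: "nat set \<Rightarrow> nat set set" where "NU X = {V. V \<subseteq> X \<and> card V = k}" for X
  have finN: "finite (NU X)" if "X \<subseteq> {1..n}" for X
    by (rule finite_subset[of _ "Pow {1..n}"]) (use that in \<open>auto simp: NU_def\<close>)
  have cN: "card (NU U) = l choose k" unfolding NU_def
    by (rule card_subsets_k[OF uU(2,3)])
  have cW: "card (NU W) = l choose k" unfolding NU_def
    by (rule card_subsets_k[OF wW(2,3)])
  have dN: "NU U \<noteq> NU W" unfolding NU_def
    by (rule subsets_differ[OF uU(2,3) wW(2,3) UW]) (use kl k1 k_def in simp_all)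
  have injP: "inj (Pair (i-1) :: nat set \<Rightarrow> nat \<times> nat set)" by (simp add: inj_on_def)
  have cX: "card (Pair (i-1) ` NU X) = card (NU X)" for X
    by (rule card_image) (use injP in \<open>simp add: inj_on_def\<close>)
  have sX: "snd ` (Pair (i-1) ` NU X) = NU X" for X by (simp add: image_image)
  have neq: "Pair (i-1) ` NU U \<noteq> Pair (i-1) ` NU W"
  proof
    assume "Pair (i-1) ` NU U = Pair (i-1) ` NU W"
    then have "snd ` (Pair (i-1) ` NU U) = snd ` (Pair (i-1) ` NU W)" by (rule arg_cong)
    then show False using dN by (simp only: sX)
  qed
  have c3U: "3 \<le> card (Pair (i-1) ` NU U)" using cX[of U] cN c3 unfolding k_def l_def by simp
  have c3W: "3 \<le> card (Pair (i-1) ` NU W)" using cX[of W] cW c3 unfolding k_def l_def by simp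
  obtain x y where xy: "x \<in> Pair (i-1) ` NU U" "y \<in> Pair (i-1) ` NU W" "x \<noteq> y"
    "x \<notin> {s,t}" "y \<notin> {s,t}"
    using pick2[OF finite_imageI[OF finN[OF uU(2)]] finite_imageI[OF finN[OF wW(2)]] c3U c3W neq, of s t] by blast
  obtain V1 where V1: "x = (i-1, V1)" "V1 \<in> NU U" using xy(1) by blast
  obtain V2 where V2: "y = (i-1, V2)" "V2 \<in> NU W" using xy(2) by blast
  have xl: "x \<in> QJ_level n A (i-1)" using V1 i uU(2) unfolding QJ_level_def NU_def k_def by auto
  have yl: "y \<in> QJ_level n A (i-1)" using V2 i wW(2) unfolding QJ_level_def NU_def k_def by auto
  have "QJ_adj n A u x" using level_verts[OF u] level_verts[OF xl] V1 uU i
    unfolding QJ_adj_def NU_def by auto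
  moreover have "QJ_adj n A w y" using level_verts[OF w] level_verts[OF yl] V2 wW i
    unfolding QJ_adj_def NU_def by auto
  ultimately show ?thesis using xl yl xy by blast
qed

theorem lemma5:
  fixes n :: nat and A :: "nat set" and s t :: "nat \<times> nat set"
  assumes "n \<ge> 4" and "A \<noteq> {}" and "A \<subseteq> {1..n}"
    and "s \<in> QJ_verts n A" and "t \<in> QJ_verts n A" and "s \<noteq> t"
  shows
   "((\<forall>a\<in>A. 1 \<le> a \<and> a < n - 1) \<longrightarrow>
      (\<forall>i. 1 \<le> i \<and> i < card A \<longrightarrow>
        (\<forall>u w. u \<in> QJ_level n A i \<and> w \<in> QJ_level n A i \<and> u \<noteq> w \<longrightarrow>
          (\<exists>u' w'. u' \<in> QJ_level n A (i + 1) \<and> w' \<in> QJ_level n A (i + 1) \<and> u' \<noteq> w' \<and>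
             u' \<notin> {s, t} \<and> w' \<notin> {s, t} \<and> QJ_adj n A u u' \<and> QJ_adj n A w w')))) \<and>
    ((\<forall>a\<in>A. 1 < a \<and> a \<le> n - 1) \<longrightarrow>
      (\<forall>i. 1 < i \<and> i \<le> card A \<longrightarrow>
        (\<forall>u w. u \<in> QJ_level n A i \<and> w \<in> QJ_level n A i \<and> u \<noteq> w \<longrightarrow>
          (\<exists>u' w'. u' \<in> QJ_level n A (i - 1) \<and> w' \<in> QJ_level n A (i - 1) \<and> u' \<noteq> w' \<and>
             u' \<notin> {s, t} \<and> w' \<notin> {s, t} \<and> QJ_adj n A u u' \<and> QJ_adj n A w w')))) \<and>
    (A = {1, n - 1} \<longrightarrow>
      (\<forall>u w. u \<in> QJ_level n A 1 \<and> w \<in> QJ_level n A 1 \<and> u \<noteq> w \<longrightarrow>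
          (\<exists>u' w'. u' \<in> QJ_level n A 2 \<and> w' \<in> QJ_level n A 2 \<and> u' \<noteq> w' \<and>
             u' \<notin> {s, t} \<and> w' \<notin> {s, t} \<and> QJ_adj n A u u' \<and> QJ_adj n A w w')) \<and>
      (\<forall>u w. u \<in> QJ_level n A 2 \<and> w \<in> QJ_level n A 2 \<and> u \<noteq> w \<longrightarrow>
          (\<exists>u' w'. u' \<in> QJ_level n A 1 \<and> w' \<in> QJ_level n A 1 \<and> u' \<noteq> w' \<and>
             u' \<notin> {s, t} \<and> w' \<notin> {s, t} \<and> QJ_adj n A u u' \<and> QJ_adj n A w w')))"
proof -
  have fA: "finite A" using assms(3) finite_subset by blast
  have P1: "(\<forall>a\<in>A. 1 \<le> a \<and> a < n - 1) \<longrightarrow>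
      (\<forall>i. 1 \<le> i \<and> i < card A \<longrightarrow>
        (\<forall>u w. u \<in> QJ_level n A i \<and> w \<in> QJ_level n A i \<and> u \<noteq> w \<longrightarrow>
          (\<exists>u' w'. u' \<in> QJ_level n A (i + 1) \<and> w' \<in> QJ_level n A (i + 1) \<and> u' \<noteq> w' \<and>
             u' \<notin> {s, t} \<and> w' \<notin> {s, t} \<and> QJ_adj n A u u' \<and> QJ_adj n A w w')))"
  proof (intro impI allI)
    fix i u w
    assume H: "\<forall>a\<in>A. 1 \<le> a \<and> a < n - 1" and i: "1 \<le> i \<and> i < card A"
      and uw: "u \<in> QJ_level n A i \<and> w \<in> QJ_level n A i \<and> u \<noteq> w"
    have kl: "elemA A i < elemA A (i+1)" using elemA_mono[OF fA, of i "i+1"] i by simp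
    have lA: "elemA A (i+1) \<in> A" using elemA_in[OF fA, of "i+1"] i by simp
    then have ln: "elemA A (i+1) < n - 1" using H by blast
    have "n - elemA A i \<le> (n - elemA A i) choose (elemA A (i+1) - elemA A i)"
      by (rule choose_ge) (use kl ln in simp_all)
    moreover have "3 \<le> n - elemA A i" using kl ln by linarith
    ultimately have c3: "3 \<le> (n - elemA A i) choose (elemA A (i+1) - elemA A i)" by linarith
    show "\<exists>u' w'. u' \<in> QJ_level n A (i + 1) \<and> w' \<in> QJ_level n A (i + 1) \<and> u' \<noteq> w' \<and>
             u' \<notin> {s, t} \<and> w' \<notin> {s, t} \<and> QJ_adj n A u u' \<and> QJ_adj n A w w'"
      by (rule level_up[OF fA _ _ _ c3]) (use i ln uw in simp_all)
  qed
  have P2: "(\<forall>a\<in>A. 1 < a \<and> a \<le> n - 1) \<longrightarrow>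
      (\<forall>i. 1 < i \<and> i \<le> card A \<longrightarrow>
        (\<forall>u w. u \<in> QJ_level n A i \<and> w \<in> QJ_level n A i \<and> u \<noteq> w \<longrightarrow>
          (\<exists>u' w'. u' \<in> QJ_level n A (i - 1) \<and> w' \<in> QJ_level n A (i - 1) \<and> u' \<noteq> w' \<and>
             u' \<notin> {s, t} \<and> w' \<notin> {s, t} \<and> QJ_adj n A u u' \<and> QJ_adj n A w w')))"
  proof (intro impI allI)
    fix i u w
    assume H: "\<forall>a\<in>A. 1 < a \<and> a \<le> n - 1" and i: "1 < i \<and> i \<le> card A"
      and uw: "u \<in> QJ_level n A i \<and> w \<in> QJ_level n A i \<and> u \<noteq> w"
    have i1: "1 \<le> i - 1" using i by linarith
    have kl: "elemA A (i-1) < elemA A i" using elemA_mono[OF fA i1, of i] i by simp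
    have kA: "elemA A (i-1) \<in> A" by (rule elemA_in[OF fA i1]) (use i in linarith)
    then have k2: "1 < elemA A (i-1)" using H by blast
    have "elemA A i \<le> elemA A i choose elemA A (i-1)"
      by (rule choose_ge) (use kl k2 in simp_all)
    then have c3: "3 \<le> elemA A i choose elemA A (i-1)" using kl k2 by linarith
    show "\<exists>u' w'. u' \<in> QJ_level n A (i - 1) \<and> w' \<in> QJ_level n A (i - 1) \<and> u' \<noteq> w' \<and>
             u' \<notin> {s, t} \<and> w' \<notin> {s, t} \<and> QJ_adj n A u u' \<and> QJ_adj n A w w'"
      by (rule level_down[OF fA _ _ _ c3]) (use i k2 uw in simp_all)
  qed
  have P3: "A = {1, n - 1} \<longrightarrow>
      (\<forall>u w. u \<in> QJ_level n A 1 \<and> w \<in> QJ_level n A 1 \<and> u \<noteq> w \<longrightarrow>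
          (\<exists>u' w'. u' \<in> QJ_level n A 2 \<and> w' \<in> QJ_level n A 2 \<and> u' \<noteq> w' \<and>
             u' \<notin> {s, t} \<and> w' \<notin> {s, t} \<and> QJ_adj n A u u' \<and> QJ_adj n A w w')) \<and>
      (\<forall>u w. u \<in> QJ_level n A 2 \<and> w \<in> QJ_level n A 2 \<and> u \<noteq> w \<longrightarrow>
          (\<exists>u' w'. u' \<in> QJ_level n A 1 \<and> w' \<in> QJ_level n A 1 \<and> u' \<noteq> w' \<and>
             u' \<notin> {s, t} \<and> w' \<notin> {s, t} \<and> QJ_adj n A u u' \<and> QJ_adj n A w w'))"
  proof (intro impI conjI allI)
    assume A: "A = {1, n - 1}"
    have cA: "card A = 2" using A assms(1) by simp
    have e12: "elemA A 1 < elemA A 2" using elemA_mono[OF fA, of 1 2] cA by simp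
    have e1: "elemA A 1 \<in> A" using elemA_in[OF fA, of 1] cA by simp
    have e2: "elemA A 2 \<in> A" using elemA_in[OF fA, of 2] cA by simp
    have E1: "elemA A 1 = 1" using e1 e2 e12 A assms(1) by auto
    have E2: "elemA A 2 = n - 1" using e1 e2 e12 A assms(1) by auto
    have E2b: "elemA A (Suc (Suc 0)) = n - 1" using E2 by (simp add: numeral_2_eq_2)
    have ch: "n - 1 \<le> (n - 1) choose (n - 2)"
      by (rule choose_ge) (use assms(1) in simp_all)
    fix u w
    {
      assume uw: "u \<in> QJ_level n A 1 \<and> w \<in> QJ_level n A 1 \<and> u \<noteq> w"
      have c3: "3 \<le> (n - elemA A 1) choose (elemA A (1+1) - elemA A 1)"
        using ch assms(1) E1 E2 by (simp add: numeral_2_eq_2 [symmetric])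
      have "\<exists>u' w'. u' \<in> QJ_level n A (1 + 1) \<and> w' \<in> QJ_level n A (1 + 1) \<and> u' \<noteq> w' \<and>
             u' \<notin> {s, t} \<and> w' \<notin> {s, t} \<and> QJ_adj n A u u' \<and> QJ_adj n A w w'"
        by (rule level_up[OF fA _ _ _ c3]) (use cA E2b assms(1) uw in simp_all)
      then show "\<exists>u' w'. u' \<in> QJ_level n A 2 \<and> w' \<in> QJ_level n A 2 \<and> u' \<noteq> w' \<and>
             u' \<notin> {s, t} \<and> w' \<notin> {s, t} \<and> QJ_adj n A u u' \<and> QJ_adj n A w w'"
        by (simp only: one_add_one)
    }
    {
      assume uw: "u \<in> QJ_level n A 2 \<and> w \<in> QJ_level n A 2 \<and> u \<noteq> w"
      have c3: "3 \<le> elemA A 2 choose elemA A (2-1)"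
        using assms(1) E1 E2 by simp
      have "\<exists>u' w'. u' \<in> QJ_level n A (2 - 1) \<and> w' \<in> QJ_level n A (2 - 1) \<and> u' \<noteq> w' \<and>
             u' \<notin> {s, t} \<and> w' \<notin> {s, t} \<and> QJ_adj n A u u' \<and> QJ_adj n A w w'"
        by (rule level_down[OF fA _ _ _ c3]) (use cA E1 uw in simp_all)
      then show "\<exists>u' w'. u' \<in> QJ_level n A 1 \<and> w' \<in> QJ_level n A 1 \<and> u' \<noteq> w' \<and>
             u' \<notin> {s, t} \<and> w' \<notin> {s, t} \<and> QJ_adj n A u u' \<and> QJ_adj n A w w'"
        using diff21 by (simp only:)
    }
  qed
  show ?thesis using P1 P2 P3 by blast
qed

end
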